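(* Let $r,q,a\in\mathbb{R}$, $\sigma>0$, $b>0$, $0\le R<1$, $T>0$, and set $V_b(t)=be^{-a(T-t)}$. The solution $B(V,t)$ of the problem \[ \frac{\partial B}{\partial t}+\frac12\sigma^2V^2\frac{\partial^2B}{\partial V^2}+(r-q)V\frac{\partial B}{\partial V}-rB=0,\quad V_b(t)<V<+\infty,\ 0<t<T, \] \[ B(V_b(t),t)=e^{-r(T-t)}R,\ 0<t<T,\qquad B(V,T)=1,\ V>b, \] is given by \[ B(V,t)=R\,e^{-r(T-t)}+W(V,t)(1-R)e^{-r(T-t)}, \] where \[ W(V,t)=N(d_1)-\left(\frac{V}{be^{-a(T-t)}}\right)^{1-\frac{2(r-q-a)}{\sigma^2}}N(d_2), \] \[ d_1=\frac{\ln\frac{V}{b}+(r-q-\frac{\sigma^2}{2})(T-t)}{\sigma\sqrt{T-t}},\qquad d_2=\frac{\ln\frac{b}{V}+(r-q-2a-\frac{\sigma^2}{2})(T-t)}{\sigma\sqrt{T-t}}. \] Furthermore, for $V>V_b(t)$ (and $0\le t<T$), \[ B_V(V,t)>0,\qquad R\,e^{-r(T-t)}<B(V,t)<e^{-r(T-t)}. \]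
   Context: $N(x)=\frac{1}{\sqrt{2\pi}}\int_{-\infty}^{x}e^{-s^2/2}\,ds$ is the standard normal distribution function. (Financial interpretation: $V$ is the firm value, $B$ the price of a zero-coupon corporate bond with face value $1$ and maturity $T$, default occurs when $V\le V_b(t)$, and $Re^{-r(T-t)}$ is the default recovery; $W$ is the survival probability.) *)

theory Defs
  imports "HOL-Analysis.Analysis"
begin

definition Ncdf :: "real \<Rightarrow> real" where
  "Ncdf x = integral {..x} (\<lambda>s. exp (-(s^2) / 2)) / sqrt (2 * pi)"

definition Vb :: "real \<Rightarrow> real \<Rightarrow> real \<Rightarrow> real \<Rightarrow> real" where
  "Vb a b T t = b * exp (-a * (T - t))"

definition d1 :: "real \<Rightarrow> real \<Rightarrow> real \<Rightarrow> real \<Rightarrow> real \<Rightarrow> real \<Rightarrow> real \<Rightarrow> real" where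
  "d1 r q \<sigma> b T V t =
     (ln (V / b) + (r - q - \<sigma>^2 / 2) * (T - t)) / (\<sigma> * sqrt (T - t))"

definition d2 :: "real \<Rightarrow> real \<Rightarrow> real \<Rightarrow> real \<Rightarrow> real \<Rightarrow> real \<Rightarrow> real \<Rightarrow> real \<Rightarrow> real" where
  "d2 r q a \<sigma> b T V t =
     (ln (b / V) + (r - q - 2 * a - \<sigma>^2 / 2) * (T - t)) / (\<sigma> * sqrt (T - t))"

definition Wsurv :: "real \<Rightarrow> real \<Rightarrow> real \<Rightarrow> real \<Rightarrow> real \<Rightarrow> real \<Rightarrow> real \<Rightarrow> real \<Rightarrow> real" where
  "Wsurv r q a \<sigma> b T V t =
     Ncdf (d1 r q \<sigma> b T V t)
     - (V / (b * exp (-a * (T - t)))) powr (1 - 2 * (r - q - a) / \<sigma>^2)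
       * Ncdf (d2 r q a \<sigma> b T V t)"

definition Bond :: "real \<Rightarrow> real \<Rightarrow> real \<Rightarrow> real \<Rightarrow> real \<Rightarrow> real \<Rightarrow> real \<Rightarrow> real \<Rightarrow> real \<Rightarrow> real" where
  "Bond r q a \<sigma> b R T V t =
     R * exp (-r * (T - t)) + Wsurv r q a \<sigma> b T V t * (1 - R) * exp (-r * (T - t))"

end

theory Submission
  imports Defs "HOL-Probability.Probability" "HOL-Real_Asymp.Real_Asymp"
begin


lemma phi_int_lborel: "integrable lborel std_normal_density" by simp

lemma phi_borel_int:
  assumes "S \<in> sets borel"
  shows "(std_normal_density has_integral (\<integral>x. indicator S x * std_normal_density x \<partial>lborel)) S"
proof -
  have "integrable lborel (\<lambda>x. indicator S x * std_normal_density x)"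
    using integrable_real_mult_indicator[of S lborel std_normal_density] assms by (simp add: mult.commute)
  from has_integral_integral_lborel[OF this]
  have "((\<lambda>x. indicator S x * std_normal_density x) has_integral (\<integral>x. indicator S x * std_normal_density x \<partial>lborel)) UNIV" .
  moreover have "(\<lambda>x. indicator S x * std_normal_density x) = (\<lambda>x. if x \<in> S then std_normal_density x else 0)"
    by (auto simp: indicator_def)
  ultimately show ?thesis using has_integral_restrict_UNIV by metis
qed

lemma phi_integrable: "S \<in> sets borel \<Longrightarrow> std_normal_density integrable_on S"
  using phi_borel_int by blast

lemma Ncdf_eq: "Ncdf x = integral {..x} std_normal_density"
proof -
  have e: "(\<lambda>s. exp (-(s^2)/2)) = (\<lambda>s. sqrt (2*pi) * std_normal_density s)"
    by (rule ext) (simp add: std_normal_density_def)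
  have "integral {..x} (\<lambda>s. sqrt (2*pi) * std_normal_density s) = sqrt (2*pi) * integral {..x} std_normal_density"
    by (rule integral_mult[symmetric]) (rule phi_integrable, simp)
  then show ?thesis unfolding Ncdf_def e by simp
qed

lemma Ncdf_L: "Ncdf x = (\<integral>s. indicator {..x} s * std_normal_density s \<partial>lborel)"
  unfolding Ncdf_eq by (rule integral_unique) (rule phi_borel_int, simp)

lemma phi_pos: "std_normal_density x > 0"
  by (simp add: normal_density_pos)

lemma Ncdf_nonneg: "Ncdf x \<ge> 0"
  unfolding Ncdf_L by (rule integral_nonneg_AE) auto

lemma Ncdf_le1: "Ncdf x \<le> 1"
proof -
  have i: "integrable lborel (\<lambda>s. indicator {..x} s * std_normal_density s)"
    using integrable_real_mult_indicator[of "{..x}" lborel std_normal_density] by (simp add: mult.commute)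
  have "(\<integral>s. indicator {..x} s * std_normal_density s \<partial>lborel) \<le> (\<integral>s. std_normal_density s \<partial>lborel)"
    by (rule integral_mono[OF i]) (auto simp: indicator_def)
  then show ?thesis unfolding Ncdf_L by simp
qed

lemma Ncdf_split: "a \<le> y \<Longrightarrow> Ncdf y = Ncdf a + integral {a..y} std_normal_density"
proof -
  assume "a \<le> y"
  then have U: "{..y} = {..a} \<union> {a..y}" by auto
  have I: "{..a} \<inter> {a..y} = {a}" using \<open>a \<le> y\<close> by auto
  have N: "negligible ({..a} \<inter> {a..y})" unfolding I by simp
  show ?thesis unfolding Ncdf_eq U
    by (rule integral_Un[OF phi_integrable phi_integrable N]) auto
qed

lemma phi_cont: "continuous_on S std_normal_density"
  unfolding normal_density_def by (intro continuous_intros) auto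

lemma Ncdf_deriv: "(Ncdf has_real_derivative std_normal_density x) (at x)"
proof -
  define a where "a = x - 1"
  define b where "b = x + 1"
  have "((\<lambda>y. integral {a..y} std_normal_density) has_real_derivative std_normal_density x) (at x within {a..b})"
    by (rule integral_has_real_derivative) (auto simp: a_def b_def phi_cont)
  then have "((\<lambda>y. Ncdf a + integral {a..y} std_normal_density) has_real_derivative std_normal_density x) (at x within {a..b})"
    using DERIV_add[OF DERIV_const] by fastforce
  then have "(Ncdf has_real_derivative std_normal_density x) (at x within {a..b})"
    by (rule has_field_derivative_transform_within[where d=1]) (auto simp: a_def b_def Ncdf_split)
  moreover have "at x within {a..b} = at x" by (rule at_within_interior) (simp add: a_def b_def)
  ultimately show ?thesis by simp
qed

lemma Ncdf_strict_mono: "x < y \<Longrightarrow> Ncdf x < Ncdf y"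
  by (rule DERIV_pos_imp_increasing) (auto intro: Ncdf_deriv phi_pos)

lemma Ncdf_pos: "Ncdf x > 0"
  using Ncdf_strict_mono[of "x-1" x] Ncdf_nonneg[of "x-1"] by simp

lemma Ncdf_less1: "Ncdf x < 1"
  using Ncdf_strict_mono[of x "x+1"] Ncdf_le1[of "x+1"] by simp

lemma Ncdf_at_top: "(Ncdf \<longlongrightarrow> 1) at_top"
proof -
  have "((\<lambda>y. \<integral>s. indicator {..y} s *\<^sub>R std_normal_density s \<partial>lborel) \<longlongrightarrow> \<integral>s. std_normal_density s \<partial>lborel) at_top"
    by (rule tendsto_integral_at_top) auto
  then show ?thesis by (simp add: Ncdf_L[abs_def])
qed

lemma Ncdf_at_bot: "(Ncdf \<longlongrightarrow> 0) at_bot"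
  unfolding filterlim_at_bot_mirror
proof (rule tendsto_at_topI_sequentially)
  fix X :: "nat \<Rightarrow> real" assume X: "filterlim X at_top sequentially"
  have "(\<lambda>n. \<integral>s. indicator {..-X n} s * std_normal_density s \<partial>lborel) \<longlonglongrightarrow> (\<integral>s. 0 \<partial>(lborel::real measure))"
  proof (rule integral_dominated_convergence)
    show "integrable lborel (\<lambda>x. norm (std_normal_density x))" by simp
    show "AE x in lborel. (\<lambda>n. indicator {..-X n} x * std_normal_density x) \<longlonglongrightarrow> 0"
    proof
      fix x
      from X have "eventually (\<lambda>n. -x + 1 \<le> X n) sequentially"
        unfolding filterlim_at_top_ge[where c="-x+1"] by auto
      then have "eventually (\<lambda>n. indicator {..-X n} x * std_normal_density x = 0) sequentially"
        by eventually_elim (auto simp: indicator_def)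
      then show "(\<lambda>n. indicator {..-X n} x * std_normal_density x) \<longlonglongrightarrow> 0"
        by (rule tendsto_eventually)
    qed
    fix n show "AE x in lborel. norm (indicator {..-X n} x * std_normal_density x) \<le> norm (std_normal_density x)"
      by (auto simp: indicator_def)
  qed auto
  then show "(\<lambda>n. Ncdf (- X n)) \<longlonglongrightarrow> 0" by (simp add: Ncdf_L)
qed

lemma phi_fun: "std_normal_density = (\<lambda>x. exp (- x\<^sup>2 / 2) / sqrt (2 * pi))"
  by (rule ext) (simp add: std_normal_density_def)

lemma phi_deriv: "(std_normal_density has_real_derivative (- x * std_normal_density x)) (at x)"
  unfolding phi_fun by (auto intro!: derivative_eq_intros simp: field_simps)

lemma mills: assumes "u < 0" shows "- u * Ncdf u < std_normal_density u"
proof -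
  define k where "k = (\<lambda>u. std_normal_density u / (- u) - Ncdf u)"
  have lim: "(k \<longlongrightarrow> 0) at_bot"
  proof -
    have "((\<lambda>u. exp (- u\<^sup>2 / 2) / sqrt (2 * pi) / (- u)) \<longlongrightarrow> 0) at_bot"
      by real_asymp
    then have "((\<lambda>u. std_normal_density u / (- u)) \<longlongrightarrow> 0) at_bot" unfolding phi_fun .
    from tendsto_diff[OF this Ncdf_at_bot] show ?thesis unfolding k_def by simp
  qed
  have "0 < k u"
  proof (rule DERIV_pos_imp_increasing_at_bot[OF _ lim])
    fix x assume "x \<le> u"
    with assms have x: "x < 0" by simp
    have "(k has_real_derivative std_normal_density x / x^2) (at x)"
      unfolding k_def using x
      by (auto intro!: derivative_eq_intros phi_deriv Ncdf_deriv simp: field_simps power2_eq_square)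
    then show "\<exists>y. (k has_real_derivative y) (at x) \<and> y > 0"
      using x phi_pos[of x] by auto
  qed
  then show ?thesis using assms unfolding k_def by (simp add: field_simps)
qed




lemma Ncdf_chain[derivative_intros]:
  "(f has_real_derivative f') (at x) \<Longrightarrow> ((\<lambda>x. Ncdf (f x)) has_real_derivative std_normal_density (f x) * f') (at x)"
  by (rule DERIV_chain2[OF Ncdf_deriv])

lemma phi_chain[derivative_intros]:
  "(f has_real_derivative f') (at x) \<Longrightarrow> ((\<lambda>x. std_normal_density (f x)) has_real_derivative (- f x * std_normal_density (f x)) * f') (at x)"
  by (rule DERIV_chain2[OF phi_deriv])


context
  fixes r q a \<sigma> b T :: real
  assumes sp: "\<sigma> > 0" and bp: "b > 0"
begin

definition "kk = 1 - 2*(r-q-a)/\<sigma>^2"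
definition "PP V t = (V / (b * exp (-a * (T - t)))) powr kk"
definition "D1 V t = d1 r q \<sigma> b T V t"
definition "D2 V t = d2 r q a \<sigma> b T V t"

lemma PP_exp: "V > 0 \<Longrightarrow> PP V t = exp (kk * (ln (V/b) + a * (T - t)))"
  unfolding PP_def using bp by (simp add: powr_def ln_div ln_mult)

lemma PP_pos: "V > 0 \<Longrightarrow> PP V t > 0"
  by (simp add: PP_exp)

lemma W_eq: "Wsurv r q a \<sigma> b T V t = Ncdf (D1 V t) - PP V t * Ncdf (D2 V t)"
  unfolding Wsurv_def PP_def D1_def D2_def kk_def by simp

lemma alg_id:
  assumes "s > 0"
  shows "kk * (L + a * s^2) - ((- L + (r - q - 2*a - \<sigma>^2/2) * s^2) / (\<sigma> * s))^2 / 2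
       = - (((L + (r - q - \<sigma>^2/2) * s^2) / (\<sigma> * s))^2 / 2)"
  using assms sp unfolding kk_def
  by (simp add: power_divide field_simps) algebra

lemma key_id:
  assumes "V > 0" "t < T"
  shows "std_normal_density (D2 V t) = std_normal_density (D1 V t) / PP V t"
proof -
  define s where "s = sqrt (T - t)"
  have s: "s > 0" "T - t = s^2" using assms by (auto simp: s_def)
  have lb: "ln (b / V) = - ln (V / b)" using assms bp by (simp add: ln_div)
  define x1 where "x1 = (ln (V/b) + (r - q - \<sigma>^2/2) * s^2) / (\<sigma> * s)"
  define x2 where "x2 = (- ln (V/b) + (r - q - 2*a - \<sigma>^2/2) * s^2) / (\<sigma> * s)"
  define y where "y = kk * (ln (V/b) + a * s^2)"
  have "D1 V t = x1"
    unfolding D1_def d1_def s_def x1_def using s by simp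
  moreover have "D2 V t = x2"
    unfolding D2_def d2_def s_def x2_def using s lb by simp
  moreover have "PP V t = exp y"
    using PP_exp[OF assms(1)] s by (simp add: y_def)
  moreover have "y - x2^2 / 2 = - (x1^2 / 2)"
    unfolding x1_def x2_def y_def by (rule alg_id[OF s(1)])
  then have "exp y * exp (- (x2^2 / 2)) = exp (- (x1^2 / 2))"
    unfolding exp_add[symmetric] by simp
  ultimately have "PP V t * std_normal_density (D2 V t) = std_normal_density (D1 V t)"
    unfolding std_normal_density_def by simp
  then show ?thesis using PP_pos[OF assms(1), of t] by (auto simp: field_simps)
qed


lemma dV1:
  assumes "V > 0" "t < T"
  shows "((\<lambda>x. D1 x t) has_real_derivative 1 / (V * \<sigma> * sqrt (T - t))) (at V)"
proof -
  obtain s where s: "s > 0" "T = t + s^2" using assms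
    by (metis add.commute diff_add_cancel diff_gt_0_iff_gt real_sqrt_gt_0_iff real_sqrt_pow2 less_imp_le)
  have sq: "sqrt (T - t) = s" "T - t = s^2" using s by simp_all
  show ?thesis unfolding D1_def d1_def
    apply (rule DERIV_cong)
     apply (auto intro!: derivative_eq_intros simp: assms bp sp)[1]
    using s sp assms bp by (auto simp: sq field_simps power2_eq_square)
qed

lemma dV2:
  assumes "V > 0" "t < T"
  shows "((\<lambda>x. D2 x t) has_real_derivative - 1 / (V * \<sigma> * sqrt (T - t))) (at V)"
proof -
  obtain s where s: "s > 0" "T = t + s^2" using assms
    by (metis add.commute diff_add_cancel diff_gt_0_iff_gt real_sqrt_gt_0_iff real_sqrt_pow2 less_imp_le)
  have sq: "sqrt (T - t) = s" "T - t = s^2" using s by simp_all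
  show ?thesis unfolding D2_def d2_def
    apply (rule DERIV_cong)
     apply (auto intro!: derivative_eq_intros simp: assms bp sp)[1]
    using s sp assms bp by (auto simp: sq field_simps power2_eq_square)
qed

lemma dVP:
  assumes "V > 0"
  shows "((\<lambda>x. PP x t) has_real_derivative kk * PP V t / V) (at V)"
proof -
  define c where "c = b * exp (- (a * (T - t)))"
  have c: "c > 0" using bp by (simp add: c_def)
  have c2: "b * exp (- a * (T - t)) = c" by (simp add: c_def)
  have pd: "(V / c) powr (kk - 1) = (V / c) powr kk / (V / c)"
    using c assms by (simp add: powr_diff)
  have e1: "(\<lambda>x. PP x t) = (\<lambda>x. (x / c) powr kk)" by (simp add: PP_def c_def)
  have e2: "PP V t = (V / c) powr kk" by (simp add: PP_def c_def)
  show ?thesis unfolding e1 e2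
    apply (rule DERIV_cong)
     apply (auto intro!: derivative_eq_intros simp: assms c)[1]
    using assms c by (auto simp: pd field_simps)
qed

lemma dt1:
  assumes "V > 0" "t < T"
  shows "((\<lambda>u. D1 V u) has_real_derivative
           (ln (V/b) - (r - q - \<sigma>^2/2) * (T - t)) / (2 * \<sigma> * (T - t) * sqrt (T - t))) (at t)"
proof -
  obtain s where s: "s > 0" "T = t + s^2" using assms
    by (metis add.commute diff_add_cancel diff_gt_0_iff_gt real_sqrt_gt_0_iff real_sqrt_pow2 less_imp_le)
  have sq: "sqrt (T - t) = s" "T - t = s^2" using s by simp_all
  show ?thesis unfolding D1_def d1_def
    apply (rule DERIV_cong)
     apply (auto intro!: derivative_eq_intros simp: assms bp sp)[1]
    using s sp assms bp by (auto simp: sq field_simps power2_eq_square)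
qed

lemma dt2:
  assumes "V > 0" "t < T"
  shows "((\<lambda>u. D2 V u) has_real_derivative
           - (ln (V/b) + (r - q - 2*a - \<sigma>^2/2) * (T - t)) / (2 * \<sigma> * (T - t) * sqrt (T - t))) (at t)"
proof -
  obtain s where s: "s > 0" "T = t + s^2" using assms
    by (metis add.commute diff_add_cancel diff_gt_0_iff_gt real_sqrt_gt_0_iff real_sqrt_pow2 less_imp_le)
  have sq: "sqrt (T - t) = s" "T - t = s^2" using s by simp_all
  have lb: "ln (b / V) = - ln (V / b)" using assms bp by (simp add: ln_div)
  show ?thesis unfolding D2_def d2_def lb
    apply (rule DERIV_cong)
     apply (auto intro!: derivative_eq_intros simp: assms bp sp)[1]
    using s sp assms bp by (auto simp: sq field_simps power2_eq_square)
qed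

lemma dtP:
  assumes "V > 0"
  shows "((\<lambda>u. PP V u) has_real_derivative - kk * a * PP V t) (at t)"
proof -
  have e: "(\<lambda>u. PP V u) = (\<lambda>u. exp (kk * (ln (V/b) + a * (T - u))))"
    using PP_exp[OF assms] by auto
  show ?thesis unfolding e
    apply (rule DERIV_cong)
     apply (auto intro!: derivative_eq_intros)[1]
    using PP_exp[OF assms] by simp
qed


definition "WV V t = (2 * std_normal_density (D1 V t) / (\<sigma> * sqrt (T - t))
   - kk * PP V t * Ncdf (D2 V t)) / V"
definition "Wt V t = std_normal_density (D1 V t) * (ln (V/b) - a * (T - t)) / (\<sigma> * (T - t) * sqrt (T - t))
   + kk * a * PP V t * Ncdf (D2 V t)"
definition "WVV V t = (- 2 * D1 V t * std_normal_density (D1 V t) / (\<sigma> * sqrt (T - t))^2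
   - kk^2 * PP V t * Ncdf (D2 V t) + kk * std_normal_density (D1 V t) / (\<sigma> * sqrt (T - t))
   - 2 * std_normal_density (D1 V t) / (\<sigma> * sqrt (T - t)) + kk * PP V t * Ncdf (D2 V t)) / V^2"

lemma dWV:
  assumes "V > 0" "t < T"
  shows "((\<lambda>x. Wsurv r q a \<sigma> b T x t) has_real_derivative WV V t) (at V)"
proof -
  obtain s where s: "s > 0" "T = t + s^2" using assms
    by (metis add.commute diff_add_cancel diff_gt_0_iff_gt real_sqrt_gt_0_iff real_sqrt_pow2 less_imp_le)
  have sq: "sqrt (T - t) = s" "T - t = s^2" using s by simp_all
  have e: "(\<lambda>x. Wsurv r q a \<sigma> b T x t) = (\<lambda>x. Ncdf (D1 x t) - PP x t * Ncdf (D2 x t))"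
    by (simp add: W_eq)
  show ?thesis unfolding e
    apply (rule DERIV_cong)
     apply (auto intro!: derivative_eq_intros dV1 dV2 dVP simp: assms)[1]
    using s(1) sp assms bp PP_pos[OF assms(1), of t] unfolding WV_def key_id[OF assms] sq
    by (auto simp: field_simps)
qed

lemma dWt:
  assumes "V > 0" "t < T"
  shows "((\<lambda>u. Wsurv r q a \<sigma> b T V u) has_real_derivative Wt V t) (at t)"
proof -
  obtain s where s: "s > 0" "T = t + s^2" using assms
    by (metis add.commute diff_add_cancel diff_gt_0_iff_gt real_sqrt_gt_0_iff real_sqrt_pow2 less_imp_le)
  have sq: "sqrt (T - t) = s" "T - t = s^2" using s by simp_all
  have e: "(\<lambda>u. Wsurv r q a \<sigma> b T V u) = (\<lambda>u. Ncdf (D1 V u) - PP V u * Ncdf (D2 V u))"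
    by (simp add: W_eq)
  show ?thesis unfolding e
    apply (rule DERIV_cong)
     apply (auto intro!: derivative_eq_intros dt1 dt2 dtP simp: assms)[1]
    using s(1) sp assms bp PP_pos[OF assms(1), of t] unfolding Wt_def key_id[OF assms] sq
    by (auto simp: field_simps) (algebra+)?
qed

lemma dWVV:
  assumes "V > 0" "t < T"
  shows "((\<lambda>x. WV x t) has_real_derivative WVV V t) (at V)"
proof -
  obtain s where s: "s > 0" "T = t + s^2" using assms
    by (metis add.commute diff_add_cancel diff_gt_0_iff_gt real_sqrt_gt_0_iff real_sqrt_pow2 less_imp_le)
  have sq: "sqrt (T - t) = s" "T - t = s^2" using s by simp_all
  show ?thesis unfolding WV_def
    apply (rule DERIV_cong)
     apply (auto intro!: derivative_eq_intros dV1 dV2 dVP simp: assms)[1]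
    using s(1) sp assms bp PP_pos[OF assms(1), of t] unfolding WVV_def key_id[OF assms] sq
    by (auto simp: field_simps) (algebra+)?
qed


lemma pde_alg:
  assumes "s > 0" "V > 0"
  shows "(Phi * (L - a * s^2) / (\<sigma> * s^2 * s) + kk * a * P * N)
    + \<sigma>^2 / 2 * V^2 * ((- 2 * ((L + (r - q - \<sigma>^2/2) * s^2) / (\<sigma> * s)) * Phi / (\<sigma> * s)^2
        - kk^2 * P * N + kk * Phi / (\<sigma> * s) - 2 * Phi / (\<sigma> * s) + kk * P * N) / V^2)
    + (r - q) * V * ((2 * Phi / (\<sigma> * s) - kk * P * N) / V) = 0"
  using assms sp unfolding kk_def
  by (simp add: field_simps) algebra

lemma W_pde:
  assumes "V > 0" "t < T"
  shows "Wt V t + \<sigma>^2 / 2 * V^2 * WVV V t + (r - q) * V * WV V t = 0"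
proof -
  obtain s where s: "s > 0" "T = t + s^2" using assms
    by (metis add.commute diff_add_cancel diff_gt_0_iff_gt real_sqrt_gt_0_iff real_sqrt_pow2 less_imp_le)
  have sq: "sqrt (T - t) = s" "T - t = s^2" using s by simp_all
  have d: "D1 V t = (ln (V/b) + (r - q - \<sigma>^2/2) * s^2) / (\<sigma> * s)"
    unfolding D1_def d1_def sq(1) by (simp add: sq(2))
  have "Wt V t + \<sigma>^2 / 2 * V^2 * WVV V t + (r - q) * V * WV V t =
    (std_normal_density (D1 V t) * (ln (V/b) - a * s^2) / (\<sigma> * s^2 * s) + kk * a * PP V t * Ncdf (D2 V t))
    + \<sigma>^2 / 2 * V^2 * ((- 2 * ((ln (V/b) + (r - q - \<sigma>^2/2) * s^2) / (\<sigma> * s)) * std_normal_density (D1 V t) / (\<sigma> * s)^2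
        - kk^2 * PP V t * Ncdf (D2 V t) + kk * std_normal_density (D1 V t) / (\<sigma> * s) - 2 * std_normal_density (D1 V t) / (\<sigma> * s) + kk * PP V t * Ncdf (D2 V t)) / V^2)
    + (r - q) * V * ((2 * std_normal_density (D1 V t) / (\<sigma> * s) - kk * PP V t * Ncdf (D2 V t)) / V)"
    unfolding Wt_def WVV_def WV_def sq(1) unfolding sq(2) by (subst (2) d) (rule refl)
  also have "\<dots> = 0" by (rule pde_alg[OF s(1) assms(1)])
  finally show ?thesis .
qed

lemma WV_pos:
  assumes "V > 0" "t < T" "V \<ge> Vb a b T t"
  shows "WV V t > 0"
proof -
  obtain s where s: "s > 0" "T = t + s^2" using assms
    by (metis add.commute diff_add_cancel diff_gt_0_iff_gt real_sqrt_gt_0_iff real_sqrt_pow2 less_imp_le)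
  have sq: "sqrt (T - t) = s" "T - t = s^2" using s by simp_all
  define L where "L = ln (V / b)"
  have Lge: "L + a * s^2 \<ge> 0"
  proof -
    have "ln (Vb a b T t) \<le> ln V" using assms bp by (simp add: Vb_def)
    then show ?thesis using bp assms unfolding L_def Vb_def sq
      by (simp add: ln_div ln_mult)
  qed
  have lb: "ln (b / V) = - L" using assms bp by (simp add: ln_div L_def)
  have P: "PP V t > 0" by (rule PP_pos[OF assms(1)])
  have N2: "Ncdf (D2 V t) > 0" by (rule Ncdf_pos)
  have ph1: "std_normal_density (D1 V t) > 0" by (rule phi_pos)
  have "kk * PP V t * Ncdf (D2 V t) < 2 * std_normal_density (D1 V t) / (\<sigma> * s)"
  proof (cases "kk \<le> 0")
    case True
    then have "kk * PP V t * Ncdf (D2 V t) \<le> 0" using P N2 by (simp add: mult_nonpos_nonneg)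
    also have "0 < 2 * std_normal_density (D1 V t) / (\<sigma> * s)" using ph1 s sp by simp
    finally show ?thesis .
  next
    case False
    define m where "m = kk * \<sigma> * s / 2"
    have m: "m > 0" using False sp s by (simp add: m_def)
    have D2: "D2 V t = - (L + a * s^2) / (\<sigma> * s) - m"
      unfolding D2_def d2_def sq lb m_def kk_def using sp s
      by (simp add: field_simps power2_eq_square)
    have "- (L + a * s^2) / (\<sigma> * s) \<le> 0" using Lge sp s by (simp add: divide_nonpos_pos)
    then have neg: "D2 V t < 0" and mle: "m \<le> - D2 V t" using m D2 by linarith+
    have "m * Ncdf (D2 V t) \<le> - D2 V t * Ncdf (D2 V t)"
      using mult_right_mono[OF mle, of "Ncdf (D2 V t)"] N2 by simp
    also have "\<dots> < std_normal_density (D2 V t)" by (rule mills[OF neg])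
    finally have "m * Ncdf (D2 V t) < std_normal_density (D1 V t) / PP V t"
      unfolding key_id[OF assms(1,2)] .
    then show ?thesis using P sp s unfolding m_def by (simp add: field_simps)
  qed
  then show ?thesis unfolding WV_def sq(1) using assms s(1) by (simp add: field_simps)
qed


lemma W_Vb: "Wsurv r q a \<sigma> b T (Vb a b T t) t = 0"
proof -
  have v: "Vb a b T t > 0" using bp by (simp add: Vb_def)
  have l1: "ln (Vb a b T t / b) = - a * (T - t)" using bp by (simp add: Vb_def)
  have l2: "ln (b / Vb a b T t) = a * (T - t)" using bp by (simp add: Vb_def ln_div ln_mult)
  have "D1 (Vb a b T t) t = D2 (Vb a b T t) t"
    unfolding D1_def d1_def D2_def d2_def l1 l2 by (simp add: algebra_simps)
  moreover have "PP (Vb a b T t) t = 1" unfolding PP_def using bp by (simp add: Vb_def)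
  ultimately show ?thesis unfolding W_eq by simp
qed

lemma W_less1: "V > 0 \<Longrightarrow> Wsurv r q a \<sigma> b T V t < 1"
  unfolding W_eq using PP_pos[of V t] Ncdf_pos[of "D2 V t"] Ncdf_less1[of "D1 V t"]
  by (smt (verit) mult_pos_pos)

lemma W_pos:
  assumes "V > Vb a b T t" "t < T"
  shows "Wsurv r q a \<sigma> b T V t > 0"
proof -
  have v: "Vb a b T t > 0" using bp by (simp add: Vb_def)
  have "Wsurv r q a \<sigma> b T (Vb a b T t) t < Wsurv r q a \<sigma> b T V t"
  proof (rule DERIV_pos_imp_increasing[OF assms(1)])
    fix x assume x: "Vb a b T t \<le> x" "x \<le> V"
    then have "x > 0" using v by simp
    then show "\<exists>y. ((\<lambda>x. Wsurv r q a \<sigma> b T x t) has_real_derivative y) (at x) \<and> y > 0"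
      using dWV[OF \<open>x > 0\<close> assms(2)] WV_pos[OF \<open>x > 0\<close> assms(2) x(1)] by blast
  qed
  then show ?thesis using W_Vb by simp
qed

lemma lim_top_aux:
  assumes "L > 0" shows "filterlim (\<lambda>t. (L + c * (T - t)) / (\<sigma> * sqrt (T - t))) at_top (at_left T)"
  using assms sp by real_asymp

lemma lim_bot_aux:
  assumes "L > 0" shows "filterlim (\<lambda>t. (- L + c * (T - t)) / (\<sigma> * sqrt (T - t))) at_bot (at_left T)"
  using assms sp by real_asymp

lemma W_terminal:
  assumes "V > b"
  shows "((\<lambda>t. Wsurv r q a \<sigma> b T V t) \<longlongrightarrow> 1) (at_left T)"
proof -
  have V: "V > 0" using assms bp by simp
  have L: "ln (V / b) > 0" using assms bp by simp
  have lb: "ln (b / V) = - ln (V / b)" using V bp by (simp add: ln_div)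
  have e: "(\<lambda>t. Wsurv r q a \<sigma> b T V t) = (\<lambda>t. Ncdf (D1 V t) - exp (kk * (ln (V/b) + a * (T - t))) * Ncdf (D2 V t))"
    using PP_exp[OF V] by (simp add: W_eq)
  have f1: "filterlim (\<lambda>t. D1 V t) at_top (at_left T)"
    unfolding D1_def d1_def by (rule lim_top_aux[OF L])
  have f2: "filterlim (\<lambda>t. D2 V t) at_bot (at_left T)"
    unfolding D2_def d2_def lb by (rule lim_bot_aux[OF L])
  have n1: "((\<lambda>t. Ncdf (D1 V t)) \<longlongrightarrow> 1) (at_left T)"
    by (rule filterlim_compose[OF Ncdf_at_top f1])
  have n2: "((\<lambda>t. Ncdf (D2 V t)) \<longlongrightarrow> 0) (at_left T)"
    by (rule filterlim_compose[OF Ncdf_at_bot f2])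
  have p: "((\<lambda>t. exp (kk * (ln (V/b) + a * (T - t)))) \<longlongrightarrow> exp (kk * (ln (V/b) + a * (T - T)))) (at_left T)"
    by (intro tendsto_intros)
  show ?thesis unfolding e using tendsto_diff[OF n1 tendsto_mult[OF p n2]] by simp
qed

end


theorem theorem3:
  fixes r q a \<sigma> b R T :: real
  assumes "\<sigma> > 0" and "b > 0" and "0 \<le> R" and "R < 1" and "T > 0"
  defines "B \<equiv> Bond r q a \<sigma> b R T"
  shows "\<exists>Bt BV BVV :: real \<Rightarrow> real \<Rightarrow> real.
           (\<forall>V t. 0 \<le> t \<and> t < T \<and> V > Vb a b T t \<longrightarrow>
               ((\<lambda>s. B V s) has_real_derivative Bt V t) (at t)
             \<and> ((\<lambda>x. B x t) has_real_derivative BV V t) (at V)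
             \<and> ((\<lambda>x. BV x t) has_real_derivative BVV V t) (at V))
         \<and> (\<forall>V t. 0 < t \<and> t < T \<and> V > Vb a b T t \<longrightarrow>
               Bt V t + 1/2 * \<sigma>^2 * V^2 * BVV V t + (r - q) * V * BV V t - r * B V t = 0)
         \<and> (\<forall>V t. 0 \<le> t \<and> t < T \<and> V > Vb a b T t \<longrightarrow>
               BV V t > 0
             \<and> R * exp (-r * (T - t)) < B V t
             \<and> B V t < exp (-r * (T - t)))
         \<and> (\<forall>t. 0 < t \<and> t < T \<longrightarrow> B (Vb a b T t) t = exp (-r * (T - t)) * R)
         \<and> (\<forall>V. V > b \<longrightarrow> ((\<lambda>t. B V t) \<longlongrightarrow> 1) (at_left T))"
proof -
  note sp = assms(1) and bp = assms(2)
  define W where "W = Wsurv r q a \<sigma> b T"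
  define E where "E = (\<lambda>t::real. exp (- r * (T - t)))"
  have Beq: "\<And>V t. B V t = R * E t + W V t * (1 - R) * E t"
    unfolding B_def Bond_def W_def E_def ..
  define Bt where "Bt = (\<lambda>V t. R * (r * E t) + (Wt r q a \<sigma> b T V t * (1 - R) * E t + W V t * (1 - R) * (r * E t)))"
  define BV where "BV = (\<lambda>V t. WV r q a \<sigma> b T V t * (1 - R) * E t)"
  define BVV where "BVV = (\<lambda>V t. WVV r q a \<sigma> b T V t * (1 - R) * E t)"
  have Vpos: "V > 0" if "V > Vb a b T t" for V t
    using that bp by (smt (verit) Vb_def exp_gt_zero mult_pos_pos)
  have dE: "(E has_real_derivative r * E t) (at t)" for t
    unfolding E_def by (auto intro!: derivative_eq_intros)
  have D: "((\<lambda>s. B V s) has_real_derivative Bt V t) (at t)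
             \<and> ((\<lambda>x. B x t) has_real_derivative BV V t) (at V)
             \<and> ((\<lambda>x. BV x t) has_real_derivative BVV V t) (at V)"
    if h: "t < T" "V > 0" for V t
  proof (intro conjI)
    have "((\<lambda>s. R * E s + W V s * (1 - R) * E s) has_real_derivative Bt V t) (at t)"
      unfolding Bt_def W_def
      apply (rule DERIV_cong)
       apply (auto intro!: derivative_eq_intros dE dWt[OF sp bp h(2) h(1)])[1]
      by (simp add: algebra_simps)
    then show "((\<lambda>s. B V s) has_real_derivative Bt V t) (at t)" unfolding Beq .
    have "((\<lambda>x. R * E t + W x t * (1 - R) * E t) has_real_derivative BV V t) (at V)"
      unfolding BV_def W_def
      apply (rule DERIV_cong)
       apply (auto intro!: derivative_eq_intros dWV[OF sp bp h(2) h(1)])[1]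
      by simp
    then show "((\<lambda>x. B x t) has_real_derivative BV V t) (at V)" unfolding Beq .
    show "((\<lambda>x. BV x t) has_real_derivative BVV V t) (at V)"
      unfolding BV_def BVV_def
      apply (rule DERIV_cong)
       apply (auto intro!: derivative_eq_intros dWVV[OF sp bp h(2) h(1)])[1]
      by simp
  qed
  have P1: "\<forall>V t. 0 \<le> t \<and> t < T \<and> V > Vb a b T t \<longrightarrow>
               ((\<lambda>s. B V s) has_real_derivative Bt V t) (at t)
             \<and> ((\<lambda>x. B x t) has_real_derivative BV V t) (at V)
             \<and> ((\<lambda>x. BV x t) has_real_derivative BVV V t) (at V)"
    using D Vpos by blast
  have P2: "\<forall>V t. 0 < t \<and> t < T \<and> V > Vb a b T t \<longrightarrow>
               Bt V t + 1/2 * \<sigma>^2 * V^2 * BVV V t + (r - q) * V * BV V t - r * B V t = 0"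
  proof (intro allI impI)
    fix V t assume h: "0 < t \<and> t < T \<and> V > Vb a b T t"
    then have V: "V > 0" and t: "t < T" using Vpos by auto
    have "Bt V t + 1/2 * \<sigma>^2 * V^2 * BVV V t + (r - q) * V * BV V t - r * B V t
       = (1 - R) * E t * (Wt r q a \<sigma> b T V t + \<sigma>^2 / 2 * V^2 * WVV r q a \<sigma> b T V t + (r - q) * V * WV r q a \<sigma> b T V t)"
      unfolding Bt_def BV_def BVV_def Beq by (simp add: field_simps)
    also have "\<dots> = 0" using W_pde[OF sp bp V t] by simp
    finally show "Bt V t + 1/2 * \<sigma>^2 * V^2 * BVV V t + (r - q) * V * BV V t - r * B V t = 0" .
  qed
  have P3: "\<forall>V t. 0 \<le> t \<and> t < T \<and> V > Vb a b T t \<longrightarrow>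
               BV V t > 0
             \<and> R * exp (-r * (T - t)) < B V t
             \<and> B V t < exp (-r * (T - t))"
  proof (intro allI impI)
    fix V t assume h: "0 \<le> t \<and> t < T \<and> V > Vb a b T t"
    then have V: "V > 0" and t: "t < T" and vb: "V > Vb a b T t" using Vpos by auto
    have Ep: "E t > 0" by (simp add: E_def)
    have R1: "1 - R > 0" using assms by simp
    have w0: "W V t > 0" unfolding W_def by (rule W_pos[OF sp bp vb t])
    have w1: "W V t < 1" unfolding W_def by (rule W_less1[OF sp bp V])
    have wv: "WV r q a \<sigma> b T V t > 0" by (rule WV_pos[OF sp bp V t]) (use vb in simp)
    show "BV V t > 0 \<and> R * exp (-r * (T - t)) < B V t \<and> B V t < exp (-r * (T - t))"
    proof (intro conjI)
      show "BV V t > 0" unfolding BV_def using wv R1 Ep by simp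
      have "0 < W V t * (1 - R) * E t" using w0 R1 Ep by simp
      then show "R * exp (-r * (T - t)) < B V t" unfolding Beq E_def by simp
      have "W V t * (1 - R) < 1 * (1 - R)" using w1 R1 by (intro mult_strict_right_mono)
      then have "W V t * (1 - R) * E t < (1 - R) * E t" using Ep by (intro mult_strict_right_mono) auto
      then show "B V t < exp (-r * (T - t))" unfolding Beq E_def by (simp add: algebra_simps)
    qed
  qed
  have P4: "\<forall>t. 0 < t \<and> t < T \<longrightarrow> B (Vb a b T t) t = exp (-r * (T - t)) * R"
    unfolding Beq W_def E_def W_Vb[OF sp bp] by simp
  have P5: "\<forall>V. V > b \<longrightarrow> ((\<lambda>t. B V t) \<longlongrightarrow> 1) (at_left T)"
  proof (intro allI impI)
    fix V :: real assume "V > b"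
    have w: "((\<lambda>t. W V t) \<longlongrightarrow> 1) (at_left T)" unfolding W_def by (rule W_terminal[OF sp bp \<open>V > b\<close>])
    have e: "(E \<longlongrightarrow> E T) (at_left T)" unfolding E_def by (intro tendsto_intros)
    have "((\<lambda>t. R * E t + W V t * (1 - R) * E t) \<longlongrightarrow> R * E T + 1 * (1 - R) * E T) (at_left T)"
      by (intro tendsto_intros e w)
    then show "((\<lambda>t. B V t) \<longlongrightarrow> 1) (at_left T)" unfolding Beq by (simp add: E_def)
  qed
  show ?thesis
    apply (rule exI[of _ Bt], rule exI[of _ BV], rule exI[of _ BVV])
    using P1 P2 P3 P4 P5 by blast
qed


end
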